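(* For all $s > 0$, $$\theta_3''(s)\theta_3(s) - \theta_3'(s)^2 > -\frac{\theta_3'(s)\theta_3(s)}{s} > 0.$$
   Context: For $s>0$, $\theta_3(s) = \sum_{k\in\mathbb{Z}} e^{-\pi k^2 s}$. *)

theory Defs
  imports "HOL-Analysis.Analysis"
begin

text \<open>Jacobi theta function theta_3(s) = sum over k in Z of exp(-pi k^2 s), for s > 0.
  (For s <= 0 the value is the library's default of infsum, irrelevant here since
  derivatives are only taken at s > 0, where they depend only on a neighbourhood.)\<close>
definition theta3 :: "real \<Rightarrow> real" where
  "theta3 s = (\<Sum>\<^sub>\<infinity>k\<in>(UNIV::int set). exp (- pi * (of_int k)^2 * s))"

end

theory Submission
  imports Defs "HOL-Probability.Characteristic_Functions"
begin


definition tt :: "nat \<Rightarrow> real \<Rightarrow> nat \<Rightarrow> real" where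
  "tt j x n = real (Suc n) ^ (2*j) * exp (- pi * real (Suc n)^2 * x)"

definition EE :: "nat \<Rightarrow> real \<Rightarrow> real" where
  "EE j x = (\<Sum>n. tt j x n)"

lemma poly_exp_bound:
  fixes c m :: real
  assumes c: "c > 0"
  shows "m^(2*j) * exp (- c * m^2) \<le> (2*j/c)^j * exp (- c * m^2 / 2)"
proof (cases "j = 0")
  case True then show ?thesis using c by (simp add: mult_nonneg_nonneg)
next
  case False
  define u where "u = c * m^2 / (2*j)"
  have u0: "u \<ge> 0" using c False by (simp add: u_def)
  have m2: "m^2 = 2*j*u/c" using c False by (simp add: u_def field_simps)
  have "u \<le> exp u" using exp_ge_add_one_self[of u] by linarith
  hence ue: "u * exp (-u) \<le> 1" by (simp add: exp_minus field_simps)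
  have "m^(2*j) * exp (- c * m^2) = (2*j/c)^j * (u * exp (-u))^j * exp (- c * m^2 / 2)"
  proof -
    have "m^(2*j) = (m^2)^j" by (simp add: power_mult)
    also have "\<dots> = (2*j/c)^j * u^j" by (simp add: m2 power_mult_distrib[symmetric] mult.commute)
    finally have "m^(2*j) = (2*j/c)^j * u^j" .
    moreover have "exp (- c * m^2) = exp(-u)^j * exp (- c * m^2 / 2)"
      using c False by (simp add: exp_of_nat_mult[symmetric] exp_add[symmetric] m2 field_simps)
    ultimately show ?thesis by (simp add: power_mult_distrib)
  qed
  also have "\<dots> \<le> (2*j/c)^j * 1 * exp (- c * m^2 / 2)"
    apply (intro mult_right_mono mult_left_mono)
    using ue u0 c by (auto intro!: power_le_one)
  finally show ?thesis by simp
qed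

lemma tt_bound:
  assumes a: "a > 0" and y: "y \<ge> a"
  shows "norm (tt j y n) \<le> (2*real j/(pi*a))^j * exp (- pi * a / 2) ^ Suc n"
proof -
  let ?m = "real (Suc n)"
  have "tt j y n \<le> ?m^(2*j) * exp (- (pi*a) * ?m^2)"
    unfolding tt_def using a y by (intro mult_left_mono) (auto intro: mult_left_mono)
  also have "\<dots> \<le> (2*real j/(pi*a))^j * exp (- (pi*a) * ?m^2 / 2)"
    by (rule poly_exp_bound) (use a in simp)
  also have "\<dots> \<le> (2*real j/(pi*a))^j * exp (- pi * a / 2) ^ Suc n"
  proof -
    have "?m \<le> ?m^2" by (simp add: power2_eq_square)
    hence "pi*a*?m \<le> pi*a*?m^2" using a by (intro mult_left_mono) auto
    hence "- (pi*a) * ?m^2 / 2 \<le> - pi*a/2 * ?m" by (simp add: algebra_simps)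
    hence "exp (- (pi*a) * ?m^2 / 2) \<le> exp (- pi*a/2 * ?m)" by simp
    also have "\<dots> = exp (- pi * a / 2) ^ Suc n"
      using exp_of_nat_mult[of "Suc n" "- pi * a / 2", symmetric] by (metis mult.commute)
    finally show ?thesis using a by (intro mult_left_mono) auto
  qed
  finally show ?thesis unfolding tt_def by simp
qed

lemma summable_geom_bound:
  assumes a: "a > 0"
  shows "summable (\<lambda>n. C * exp (- pi * a / 2) ^ Suc n)"
  using a by (intro summable_mult summable_Suc_iff[THEN iffD2] summable_geometric) auto

lemma tt_summable:
  assumes y: "y > 0" shows "summable (tt j y)"
proof (rule summable_comparison_test')
  show "summable (\<lambda>n. (2*real j/(pi*y))^j * exp (- pi * y / 2) ^ Suc n)"
    using y by (rule summable_geom_bound)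
  show "norm (tt j y n) \<le> (2*real j/(pi*y))^j * exp (- pi * y / 2) ^ Suc n" for n
    using y by (intro tt_bound) auto
qed

lemma tt_Suc: "tt (Suc j) y n = real (Suc n)^2 * tt j y n"
  by (simp add: tt_def power_add power2_eq_square)

lemma tt_nonneg: "tt j y n \<ge> 0" by (simp add: tt_def)

lemma tt_deriv: "((\<lambda>x. tt j x n) has_field_derivative (- pi * tt (Suc j) y n)) (at y within S)"
proof -
  have "((\<lambda>x. real (Suc n) ^ (2*j) * exp (- pi * real (Suc n)^2 * x)) has_field_derivative
     real (Suc n) ^ (2*j) * (exp (- pi * real (Suc n)^2 * y) * (- pi * real (Suc n)^2))) (at y within S)"
    by (auto intro!: derivative_eq_intros)
  then show ?thesis unfolding tt_Suc by (simp add: tt_def algebra_simps)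
qed

lemma EE_deriv:
  assumes y: "y > 0"
  shows "(EE j has_field_derivative (- pi * EE (Suc j) y)) (at y)"
proof -
  let ?S = "{y/2..}"
  have "((\<lambda>x. \<Sum>n. tt j x n) has_field_derivative (\<Sum>n. - pi * tt (Suc j) y n)) (at y)"
  proof (rule has_field_derivative_series'(2))
    show "convex ?S" by simp
    show "\<And>n x. x \<in> ?S \<Longrightarrow> ((\<lambda>x. tt j x n) has_field_derivative - pi * tt (Suc j) x n) (at x within ?S)"
      by (rule tt_deriv)
    show "uniformly_convergent_on ?S (\<lambda>n x. \<Sum>i<n. - pi * tt (Suc j) x i)"
    proof (rule Weierstrass_m_test')
      define B where "B n = (2*real (Suc j)/(pi*(y/2)))^Suc j * exp (- pi * (y/2) / 2) ^ Suc n" for n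
      show "summable (\<lambda>n. pi * B n)"
        unfolding B_def using summable_geom_bound[of "y/2"] y by (intro summable_mult) auto
      fix n x assume "x \<in> ?S"
      then have "norm (tt (Suc j) x n) \<le> B n"
        unfolding B_def using y by (intro tt_bound) auto
      then show "norm (- pi * tt (Suc j) x n) \<le> pi * B n"
        using mult_left_mono[of _ _ pi] pi_ge_zero unfolding norm_mult by auto
    qed
    show "y \<in> ?S" using y by simp
    show "summable (tt j y)" using y by (rule tt_summable)
    show "y \<in> interior ?S" using y by simp
  qed
  moreover have "(\<Sum>n. - pi * tt (Suc j) y n) = - pi * EE (Suc j) y"
    unfolding EE_def using tt_summable[OF y] by (rule suminf_mult)
  ultimately show ?thesis unfolding EE_def[abs_def] by simp
qed


lemma theta3_eq:
  assumes x: "x > 0"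
  shows "theta3 x = 1 + 2 * EE 0 x"
proof -
  let ?f = "\<lambda>k::int. exp (- pi * (of_int k)^2 * x)"
  have hs: "(tt 0 x has_sum EE 0 x) UNIV"
    unfolding EE_def using tt_summable[OF x, of 0]
    by (intro sums_nonneg_imp_has_sum) (auto simp: summable_sums tt_nonneg)
  have "(?f has_sum EE 0 x) ((\<lambda>n. int (Suc n)) ` UNIV)"
    by (subst has_sum_reindex) (auto simp: inj_on_def o_def tt_def intro: has_sum_cong[THEN iffD1, OF _ hs])
  moreover have "(?f has_sum EE 0 x) ((\<lambda>n. - int (Suc n)) ` UNIV)"
  proof (subst has_sum_reindex)
    have "(?f \<circ> (\<lambda>n. - int (Suc n))) = tt 0 x"
      by (auto simp: fun_eq_iff tt_def power2_eq_square algebra_simps)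
    then show "((?f \<circ> (\<lambda>n. - int (Suc n))) has_sum EE 0 x) UNIV" using hs by simp
  qed (auto simp: inj_on_def)
  moreover have "(?f has_sum 1) {0}" by (rule has_sum_finiteI) auto
  ultimately have "(?f has_sum (1 + (EE 0 x + EE 0 x))) ({0} \<union> (((\<lambda>n. int (Suc n)) ` UNIV) \<union> ((\<lambda>n. - int (Suc n)) ` UNIV)))"
    by (intro has_sum_Un_disjoint) auto
  moreover have "{0} \<union> (((\<lambda>n. int (Suc n)) ` UNIV) \<union> ((\<lambda>n. - int (Suc n)) ` UNIV)) = UNIV"
  proof -
    have "k \<in> {0} \<union> (((\<lambda>n. int (Suc n)) ` UNIV) \<union> ((\<lambda>n. - int (Suc n)) ` UNIV))" for k :: int
    proof (cases "k > 0")
      case True then show ?thesis by (auto intro!: image_eqI[of _ _ "nat k - 1"])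
    next
      case False
      then show ?thesis by (cases "k = 0") (auto intro!: image_eqI[of _ _ "nat (-k) - 1"])
    qed
    then show ?thesis by auto
  qed
  ultimately show ?thesis unfolding theta3_def by (simp add: infsumI)
qed

lemma theta3_deriv:
  assumes x: "x > 0"
  shows "(theta3 has_field_derivative (- 2 * pi * EE 1 x)) (at x)"
proof -
  have "((\<lambda>x. 1 + 2 * EE 0 x) has_field_derivative (- 2 * pi * EE 1 x)) (at x)"
    using EE_deriv[OF x, of 0] by (auto intro!: derivative_eq_intros)
  then show ?thesis
    by (rule has_field_derivative_transform_within_open[of _ _ _ "{0<..}"]) (use x theta3_eq in auto)
qed

lemma deriv_theta3: "x > 0 \<Longrightarrow> deriv theta3 x = - 2 * pi * EE 1 x"
  by (rule DERIV_imp_deriv[OF theta3_deriv])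

lemma deriv2_theta3:
  assumes x: "x > 0"
  shows "deriv (deriv theta3) x = 2 * pi^2 * EE 2 x"
proof -
  have "((\<lambda>x. - 2 * pi * EE 1 x) has_field_derivative (- 2 * pi * (- pi * EE (Suc 1) x))) (at x)"
    by (auto intro!: derivative_eq_intros EE_deriv x)
  then have "(deriv theta3 has_field_derivative (- 2 * pi * (- pi * EE (Suc 1) x))) (at x)"
    by (rule has_field_derivative_transform_within_open[of _ _ _ "{0<..}"]) (use x deriv_theta3 in auto)
  then show ?thesis by (auto dest!: DERIV_imp_deriv simp: power2_eq_square numeral_2_eq_2)
qed


definition th :: "real \<Rightarrow> real" where "th x = 1 + 2 * EE 0 x"
definition d1 :: "real \<Rightarrow> real" where "d1 x = - 2 * pi * EE 1 x"
definition d2 :: "real \<Rightarrow> real" where "d2 x = 2 * pi^2 * EE 2 x"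

lemma th_has: "x > 0 \<Longrightarrow> (th has_field_derivative d1 x) (at x)"
  unfolding th_def[abs_def] d1_def using EE_deriv[of x 0] by (auto intro!: derivative_eq_intros)

lemma d1_has: "x > 0 \<Longrightarrow> (d1 has_field_derivative d2 x) (at x)"
  unfolding d1_def[abs_def] d2_def using EE_deriv[of x 1] by (auto intro!: derivative_eq_intros simp: power2_eq_square numeral_2_eq_2)

lemma inv_has: fixes x :: real assumes "x > 0" shows "((\<lambda>x. 1/x) has_field_derivative (- 1/x^2)) (at x)"
proof -
  have "x \<noteq> 0" using assms by simp
  from DERIV_inverse[OF this, of UNIV] show ?thesis by (simp add: divide_inverse power2_eq_square)
qed

lemma isqrt_has: "x > 0 \<Longrightarrow> ((\<lambda>x. 1/sqrt x) has_field_derivative (- 1/(2*x * sqrt x))) (at x)"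
  by (auto intro!: derivative_eq_intros simp: field_simps)

lemma p1: fixes x :: real assumes x: "x > 0" shows "((\<lambda>x. 1 / (x^2 * sqrt x)) has_field_derivative (- 5 / (2 * x^3 * sqrt x))) (at x)"
proof -
  obtain q where q: "q > 0" "x = q^2" using x by (metis real_sqrt_gt_0_iff real_sqrt_pow2 less_imp_le) 
  have sq: "sqrt x = q" using q by simp
  show ?thesis
  using x apply (auto intro!: derivative_eq_intros)
    unfolding sq using q(1) by (simp add: q(2) field_simps power2_eq_square power3_eq_cube)
qed

lemma p2: fixes x :: real assumes x: "x > 0" shows "((\<lambda>x. 1 / (2 * x * sqrt x)) has_field_derivative (- 3 / (4 * x^2 * sqrt x))) (at x)"
proof -
  obtain q where q: "q > 0" "x = q^2" using x by (metis real_sqrt_gt_0_iff real_sqrt_pow2 less_imp_le) 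
  have sq: "sqrt x = q" using q by simp
  show ?thesis
  using x apply (auto intro!: derivative_eq_intros)
    unfolding sq using q(1) by (simp add: q(2) field_simps power2_eq_square power3_eq_cube)
qed

lemma alg2: fixes x q A B C :: real assumes q: "q > 0" and xq: "x = q^2"
  shows "- (B * (- 5 / (2 * x^3 * q)) + C * (- 1/x^2) * (1 / (x^2 * q)))
     - (A * (- 3 / (4 * x^2 * q)) + B * (- 1/x^2) * (1 / (2 * x * q)))
   = C / (x^4 * q) + 3 * B / (x^3 * q) + 3 * A / (4 * x^2 * q)"
  using q unfolding xq by (simp add: field_simps)

lemma algT: fixes x q A B C :: real assumes q: "q > 0" and xq: "x = q^2"
  shows "x * ((C / (x^4 * q) + 3 * B / (x^3 * q) + 3 * A / (4 * x^2 * q)) * (A / q)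
     - (- (B * (1 / (x^2 * q))) - A * (1 / (2 * x * q)))^2)
     + (- (B * (1 / (x^2 * q))) - A * (1 / (2 * x * q))) * (A / q)
   = ((1/x) * (C * A - B^2) + B * A) / x^3"
  using q unfolding xq apply (simp add: field_simps)
  apply algebra
  done

lemma FE_d1:
  assumes FE: "\<And>x. x > 0 \<Longrightarrow> th x = th (1/x) / sqrt x" and x: "x > 0"
  shows "d1 x = - (d1 (1/x) * (1 / (x^2 * sqrt x))) - th (1/x) * (1 / (2 * x * sqrt x))"
proof -
  have c: "((\<lambda>x. th (1/x)) has_field_derivative d1 (1/x) * (- 1/x^2)) (at x)"
    by (rule DERIV_chain2[OF th_has inv_has]) (use x in auto)
  have "((\<lambda>x. th (1/x) * (1 / sqrt x)) has_field_derivative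
          th (1/x) * (- 1/(2*x * sqrt x)) + d1 (1/x) * (- 1/x^2) * (1 / sqrt x)) (at x)"
    by (rule DERIV_mult'[OF c isqrt_has[OF x], THEN DERIV_cong]) (simp add: algebra_simps)
  then have "(th has_field_derivative
          th (1/x) * (- 1/(2*x * sqrt x)) + d1 (1/x) * (- 1/x^2) * (1 / sqrt x)) (at x)"
  proof (rule has_field_derivative_transform_within_open[of _ _ _ "{0<..}"])
    fix y :: real assume "y \<in> {0<..}"
    then have "th y = th (1/y) / sqrt y" using FE[of y] by simp
    then show "th (1/y) * (1 / sqrt y) = th y" by simp
  qed (use x in auto)
  then have "d1 x = th (1/x) * (- 1/(2*x * sqrt x)) + d1 (1/x) * (- 1/x^2) * (1 / sqrt x)"
    using DERIV_unique th_has[OF x] by blast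
  then show ?thesis by (simp add: algebra_simps)
qed

lemma FE_d2:
  assumes FE: "\<And>x. x > 0 \<Longrightarrow> th x = th (1/x) / sqrt x" and x: "x > 0"
  shows "d2 x = d2 (1/x) / (x^4 * sqrt x) + 3 * d1 (1/x) / (x^3 * sqrt x) + 3 * th (1/x) / (4 * x^2 * sqrt x)"
proof -
  have c: "((\<lambda>x. th (1/x)) has_field_derivative d1 (1/x) * (- 1/x^2)) (at x)"
    by (rule DERIV_chain2[OF th_has inv_has]) (use x in auto)
  have c1: "((\<lambda>x. d1 (1/x)) has_field_derivative d2 (1/x) * (- 1/x^2)) (at x)"
    by (rule DERIV_chain2[OF d1_has inv_has]) (use x in auto)
  note p1 = p1[OF x] and p2 = p2[OF x]
  have "((\<lambda>x. - (d1 (1/x) * (1 / (x^2 * sqrt x))) - th (1/x) * (1 / (2 * x * sqrt x))) has_field_derivative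
     - (d1 (1/x) * (- 5 / (2 * x^3 * sqrt x)) + d2 (1/x) * (- 1/x^2) * (1 / (x^2 * sqrt x)))
     - (th (1/x) * (- 3 / (4 * x^2 * sqrt x)) + d1 (1/x) * (- 1/x^2) * (1 / (2 * x * sqrt x)))) (at x)"
    by (intro DERIV_diff DERIV_minus DERIV_mult' c c1 p1 p2)
  then have "(d1 has_field_derivative
     - (d1 (1/x) * (- 5 / (2 * x^3 * sqrt x)) + d2 (1/x) * (- 1/x^2) * (1 / (x^2 * sqrt x)))
     - (th (1/x) * (- 3 / (4 * x^2 * sqrt x)) + d1 (1/x) * (- 1/x^2) * (1 / (2 * x * sqrt x)))) (at x)"
  proof (rule has_field_derivative_transform_within_open[of _ _ _ "{0<..}"])
    fix y :: real assume "y \<in> {0<..}"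
    then have "d1 y = - (d1 (1/y) * (1 / (y^2 * sqrt y))) - th (1/y) * (1 / (2 * y * sqrt y))"
      using FE_d1[OF FE, of y] by simp
    then show "- (d1 (1/y) * (1 / (y^2 * sqrt y))) - th (1/y) * (1 / (2 * y * sqrt y)) = d1 y" by simp
  qed (use x in auto)
  then have h: "d2 x = - (d1 (1/x) * (- 5 / (2 * x^3 * sqrt x)) + d2 (1/x) * (- 1/x^2) * (1 / (x^2 * sqrt x)))
     - (th (1/x) * (- 3 / (4 * x^2 * sqrt x)) + d1 (1/x) * (- 1/x^2) * (1 / (2 * x * sqrt x)))"
    using DERIV_unique d1_has[OF x] by blast
  obtain q where q: "q > 0" "x = q^2" using x by (metis real_sqrt_gt_0_iff real_sqrt_pow2 less_imp_le) 
  have sq: "sqrt x = q" using q by simp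
  have "d2 x = d2 (1/x) / (x^4 * q) + 3 * d1 (1/x) / (x^3 * q) + 3 * th (1/x) / (4 * x^2 * q)"
    using h alg2[OF q, where A="th (1/x)" and B="d1 (1/x)" and C="d2 (1/x)"] unfolding sq by linarith
  then show ?thesis by (simp only: sq)
qed

definition TT :: "real \<Rightarrow> real" where
  "TT x = x * (d2 x * th x - (d1 x)^2) + d1 x * th x"

lemma TT_sym:
  assumes FE: "\<And>x. x > 0 \<Longrightarrow> th x = th (1/x) / sqrt x" and s: "s > 0"
  shows "TT s = TT (1/s) / s^3"
proof -
  define q where "q = sqrt s"
  have q: "q > 0" "s = q^2" using s by (auto simp: q_def)
  have e0: "th s = th (1/s) / q" using FE[OF s] q_def by simp
  have e1: "d1 s = - (d1 (1/s) * (1 / (s^2 * q))) - th (1/s) * (1 / (2 * s * q))" using FE_d1[OF FE s] q_def by simp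
  have e2: "d2 s = d2 (1/s) / (s^4 * q) + 3 * d1 (1/s) / (s^3 * q) + 3 * th (1/s) / (4 * s^2 * q)"
    using FE_d2[OF FE s] q_def by simp
  show ?thesis unfolding TT_def e0 e1 e2 by (rule algT[OF q])
qed


lemma exp_pi_ge: "exp pi \<ge> 8"
proof -
  have "1 + pi + pi^2/2 \<le> exp pi" by (rule exp_lower_Taylor_quadratic) simp
  moreover have "pi^2 \<ge> 3^2" using pi_gt3 by (intro power_mono) auto
  ultimately show ?thesis using pi_gt3 by simp
qed

lemma q_le: "exp (- pi) \<le> 1/8"
  using exp_pi_ge by (simp add: exp_minus field_simps)

lemma pow4: "real (Suc n)^2 \<le> 4^n"
proof (induction n)
  case (Suc n)
  have "real (Suc (Suc n))^2 \<le> 4 * real (Suc n)^2"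
    by (simp add: power2_eq_square algebra_simps)
  also have "\<dots> \<le> 4 * 4^n" using Suc by simp
  finally show ?case by simp
qed simp

lemma exp_le_q: assumes x: "x \<ge> 1" shows "exp (- pi * real (Suc n)^2 * x) \<le> exp (- pi) ^ Suc n"
proof -
  have "real (Suc n) \<le> real (Suc n)^2 * x"
  proof -
    have "real (Suc n) \<le> real (Suc n)^2" by (simp add: power2_eq_square)
    also have "\<dots> \<le> real (Suc n)^2 * x" using x by (simp add: mult_le_cancel_left1)
    finally show ?thesis .
  qed
  then have "pi * real (Suc n) \<le> pi * (real (Suc n)^2 * x)"
    by (rule mult_left_mono) simp
  then have "- pi * real (Suc n)^2 * x \<le> real (Suc n) * (- pi)"
    by (simp add: algebra_simps)
  then have "exp (- pi * real (Suc n)^2 * x) \<le> exp (real (Suc n) * (- pi))" by simp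
  also have "\<dots> = exp (- pi) ^ Suc n" by (rule exp_of_nat_mult)
  finally show ?thesis .
qed

lemma E0_le: assumes x: "x \<ge> 1" shows "EE 0 x \<le> 1/7"
proof -
  let ?q = "exp (- pi)"
  have q: "0 < ?q" "?q \<le> 1/8" using q_le by auto
  have sg: "(\<lambda>n. ?q * ?q^n) sums (?q * (1 / (1 - ?q)))"
    using q by (intro sums_mult geometric_sums) auto
  have "EE 0 x \<le> (\<Sum>n. ?q * ?q^n)"
    unfolding EE_def
    by (intro suminf_le) (use exp_le_q[OF x] tt_summable[of x 0] x sg in \<open>auto simp: tt_def sums_iff\<close>)
  also have "\<dots> = ?q / (1 - ?q)" using sg by (simp add: sums_iff)
  also have "\<dots> \<le> 1/7" using q by (simp add: field_simps)
  finally show ?thesis .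
qed

lemma E1_le: assumes x: "x \<ge> 1" shows "EE 1 x \<le> 1/4"
proof -
  let ?q = "exp (- pi)"
  have q: "0 < ?q" "?q \<le> 1/8" using q_le by auto
  have sg: "(\<lambda>n. ?q * (4 * ?q)^n) sums (?q * (1 / (1 - 4 * ?q)))"
    using q by (intro sums_mult geometric_sums) auto
  have "tt 1 x n \<le> ?q * (4 * ?q)^n" for n
  proof -
    have "tt 1 x n \<le> 4^n * ?q ^ Suc n"
      unfolding tt_def using pow4[of n] exp_le_q[OF x, of n]
      by (auto intro!: mult_mono)
    also have "\<dots> = ?q * (4 * ?q)^n" by (simp add: power_mult_distrib)
    finally show ?thesis .
  qed
  then have "EE 1 x \<le> (\<Sum>n. ?q * (4 * ?q)^n)"
    unfolding EE_def
    by (intro suminf_le) (use tt_summable[of x 1] x sg in \<open>auto simp: sums_iff\<close>)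
  also have "\<dots> = ?q / (1 - 4 * ?q)" using sg by (simp add: sums_iff)
  also have "\<dots> \<le> 1/4" using q by (simp add: field_simps)
  finally show ?thesis .
qed

lemma E1_le_E2: assumes x: "x > 0" shows "EE 1 x \<le> EE 2 x"
  unfolding EE_def
proof (rule suminf_le)
  show "tt 1 x n \<le> tt 2 x n" for n
  proof -
    have "real (Suc n)^2 \<le> real (Suc n)^4"
      by (rule power_increasing) auto
    then show ?thesis unfolding tt_def by (intro mult_right_mono) auto
  qed
qed (use tt_summable x in auto)

lemma E1_pos: assumes x: "x > 0" shows "EE 1 x > 0"
  unfolding EE_def
  by (rule suminf_pos) (use tt_summable x in \<open>auto simp: tt_def\<close>)

lemma E0_nonneg: assumes x: "x > 0" shows "EE 0 x \<ge> 0"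
  unfolding EE_def
  by (rule suminf_nonneg) (use tt_summable x in \<open>auto simp: tt_def\<close>)

lemma TT_pos: assumes x: "x \<ge> 1" shows "TT x > 0"
proof -
  have x0: "x > 0" using x by simp
  define a where "a = EE 0 x"
  define b where "b = EE 1 x"
  define c where "c = EE 2 x"
  have a: "0 \<le> a" "a \<le> 1/7" using E0_nonneg[OF x0] E0_le[OF x] by (auto simp: a_def)
  have b: "0 < b" "b \<le> 1/4" using E1_pos[OF x0] E1_le[OF x] by (auto simp: b_def)
  have bc: "b \<le> c" using E1_le_E2[OF x0] by (simp add: b_def c_def)
  have TT: "TT x = x * (2 * pi^2 * c * (1 + 2 * a) - 4 * pi^2 * b^2) - 2 * pi * b * (1 + 2 * a)"
    unfolding TT_def th_def d1_def d2_def a_def b_def c_def by (simp add: power2_eq_square algebra_simps)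
  have "b^2 \<le> b / 4" using b by (simp add: power2_eq_square mult_left_mono)
  then have "4 * b^2 \<le> b" by simp
  then have "pi^2 * (4 * b^2) \<le> pi^2 * b" by (rule mult_left_mono) simp
  then have h1: "4 * (pi^2 * b^2) \<le> pi^2 * b" by (simp add: algebra_simps)
  have h2: "0 \<le> pi^2 * c * a" using a b bc by simp
  have "2 * pi^2 * c * (1 + 2 * a) - 4 * pi^2 * b^2 = 2 * pi^2 * c + 4 * (pi^2 * c * a) - 4 * (pi^2 * b^2)"
    by (simp add: algebra_simps)
  also have "\<dots> \<ge> 2 * pi^2 * c - pi^2 * b" using h1 h2 by linarith
  finally have "2 * pi^2 * c * (1 + 2 * a) - 4 * pi^2 * b^2 \<ge> 2 * pi^2 * c - pi^2 * b" .
  also have "2 * pi^2 * c - pi^2 * b \<ge> pi^2 * b" using bc by (simp add: algebra_simps mult_left_mono)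
  finally have K: "2 * pi^2 * c * (1 + 2 * a) - 4 * pi^2 * b^2 \<ge> pi^2 * b" by linarith
  have "x * (2 * pi^2 * c * (1 + 2 * a) - 4 * pi^2 * b^2) \<ge> 1 * (pi^2 * b)"
    using K x b by (intro mult_mono) auto
  moreover have "2 * pi * b * (1 + 2 * a) \<le> 2 * pi * b * (9/7)"
    using a b by (intro mult_left_mono) auto
  moreover have "pi^2 * b > 2 * pi * b * (9/7)"
  proof -
    have "pi * b * (18/7) < pi * b * pi" using pi_gt3 b by (intro mult_strict_left_mono) auto
    then show ?thesis by (simp add: power2_eq_square algebra_simps)
  qed
  ultimately show ?thesis unfolding TT by linarith
qed


lemma main_given_FE:
  assumes FE: "\<And>x. x > 0 \<Longrightarrow> th x = th (1/x) / sqrt x"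
  fixes s :: real
  assumes "s > 0"
  shows "deriv (deriv theta3) s * theta3 s - (deriv theta3 s)^2
           > - (deriv theta3 s * theta3 s) / s
       \<and> - (deriv theta3 s * theta3 s) / s > 0"
proof -
  have s: "s > 0" by fact
  have e: "theta3 s = th s" "deriv theta3 s = d1 s" "deriv (deriv theta3) s = d2 s"
    using theta3_eq[OF s] deriv_theta3[OF s] deriv2_theta3[OF s] by (auto simp: th_def d1_def d2_def)
  have T: "TT s > 0"
  proof (cases "s \<ge> 1")
    case True then show ?thesis by (rule TT_pos)
  next
    case False
    then have "1/s \<ge> 1" using s by (simp add: field_simps)
    then have "TT (1/s) > 0" by (rule TT_pos)
    then show ?thesis using TT_sym[OF FE s] s by simp
  qed
  have th: "th s > 0" using E0_nonneg[OF s] by (simp add: th_def)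
  have d1: "d1 s < 0" using E1_pos[OF s] pi_gt_zero by (simp add: d1_def)
  have "d1 s * th s < 0" using th d1 by (simp add: mult_neg_pos)
  then have pos: "- (d1 s * th s) / s > 0" using s by (simp add: divide_neg_pos)
  have "s * (d2 s * th s - (d1 s)^2) > - (d1 s * th s)" using T unfolding TT_def by simp
  then have "d2 s * th s - (d1 s)^2 > - (d1 s * th s) / s" using s by (simp add: field_simps)
  with pos show ?thesis unfolding e by simp
qed


abbreviation "II \<equiv> {-(1/2)..1/2::real}"

lemma U1:
  fixes H :: "real \<Rightarrow> real"
  assumes cH: "continuous_on II H"
    and z: "\<And>m::nat. integral II (\<lambda>x. H x * cos (2*pi*real m*x)) = 0"
  shows "integral II (\<lambda>x. H x * (cos (2*pi*x)^k * cos (2*pi*real j*x))) = 0"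
proof (induction k arbitrary: j)
  case 0 then show ?case using z by simp
next
  case (Suc k)
  show ?case
  proof (cases j)
    case 0
    have "integral II (\<lambda>x. H x * (cos (2*pi*x)^Suc k * cos (2*pi*real j*x))) =
          integral II (\<lambda>x. H x * (cos (2*pi*x)^k * cos (2*pi*real (1::nat)*x)))"
      using 0 by (simp add: algebra_simps)
    then show ?thesis using Suc.IH[of 1] by simp
  next
    case (Suc i)
    have tr: "cos (2*pi*x) * cos (2*pi*real j*x) = (cos (2*pi*real (Suc (Suc i))*x) + cos (2*pi*real i*x)) / 2" for x
    proof -
      have "cos (2*pi*x) * cos (2*pi*real j*x) = (cos (2*pi*x - 2*pi*real j*x) + cos (2*pi*x + 2*pi*real j*x)) / 2"
        by (rule cos_times_cos)
      also have "2*pi*x - 2*pi*real j*x = - (2*pi*real i*x)" using Suc by (simp add: algebra_simps)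
      also have "2*pi*x + 2*pi*real j*x = 2*pi*real (Suc (Suc i))*x" using Suc by (simp add: algebra_simps)
      finally show ?thesis by simp
    qed
    have eq: "(\<lambda>x. H x * (cos (2*pi*x)^Suc k * cos (2*pi*real j*x))) =
       (\<lambda>x. (1/2) * (H x * (cos (2*pi*x)^k * cos (2*pi*real (Suc (Suc i))*x))) +
            (1/2) * (H x * (cos (2*pi*x)^k * cos (2*pi*real i*x))))"
    proof (rule ext)
      fix x
      let ?c = "cos (2*pi*x)"
      have "H x * (?c^Suc k * cos (2*pi*real j*x)) = H x * ?c^k * (?c * cos (2*pi*real j*x))"
        by (simp add: algebra_simps)
      also have "\<dots> = H x * ?c^k * ((cos (2*pi*real (Suc (Suc i))*x) + cos (2*pi*real i*x)) / 2)"
        by (simp only: tr)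
      also have "\<dots> = (1/2) * (H x * (?c^k * cos (2*pi*real (Suc (Suc i))*x))) +
            (1/2) * (H x * (?c^k * cos (2*pi*real i*x)))"
        by (simp only: algebra_simps add_divide_distrib)
      finally show "H x * (?c^Suc k * cos (2*pi*real j*x)) = (1/2) * (H x * (?c^k * cos (2*pi*real (Suc (Suc i))*x))) +
            (1/2) * (H x * (?c^k * cos (2*pi*real i*x)))" .
    qed
    have int: "(\<lambda>x. H x * (cos (2*pi*x)^k * cos (2*pi*real l*x))) integrable_on II" for l
      by (intro integrable_continuous_interval continuous_intros cH)
    have h0: "((\<lambda>x. H x * (cos (2*pi*x)^k * cos (2*pi*real l*x))) has_integral 0) II" for l
      using int[of l] Suc.IH[of l] by (metis has_integral_integral)
    have "((\<lambda>x. (1/2) * (H x * (cos (2*pi*x)^k * cos (2*pi*real (Suc (Suc i))*x))) +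
            (1/2) * (H x * (cos (2*pi*x)^k * cos (2*pi*real i*x)))) has_integral ((1/2) * 0 + (1/2) * 0)) II"
      by (intro has_integral_add has_integral_cmult_real h0)
    then show ?thesis unfolding eq by (simp add: integral_unique)
  qed
qed

lemma U2:
  fixes H :: "real \<Rightarrow> real"
  assumes cH: "continuous_on II H"
    and z: "\<And>m::nat. integral II (\<lambda>x. H x * cos (2*pi*real m*x)) = 0"
  shows "integral II (\<lambda>x. H x * (\<Sum>i\<le>n. a i * cos (2*pi*x)^i)) = 0"
proof -
  have "integral II (\<lambda>x. H x * (\<Sum>i\<le>n. a i * cos (2*pi*x)^i)) =
        integral II (\<lambda>x. \<Sum>i\<le>n. a i * (H x * (cos (2*pi*x)^i * cos (2*pi*real (0::nat)*x))))"
    by (simp add: sum_distrib_left algebra_simps)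
  also have "\<dots> = (\<Sum>i\<le>n. integral II (\<lambda>x. a i * (H x * (cos (2*pi*x)^i * cos (2*pi*real (0::nat)*x)))))"
    by (rule integral_sum) (auto intro!: integrable_continuous_interval continuous_intros cH)
  also have "\<dots> = 0"
    using U1[OF cH z] by (simp add: integral_mult_right del: of_nat_0)
  finally show ?thesis .
qed

lemma uniq:
  fixes H :: "real \<Rightarrow> real"
  assumes cH: "continuous_on II H"
    and ev: "\<And>x. x \<in> II \<Longrightarrow> H (-x) = H x"
    and z: "\<And>m::nat. integral II (\<lambda>x. H x * cos (2*pi*real m*x)) = 0"
  shows "H 0 = 0"
proof -
  define h where "h y = H (arccos y / (2*pi))" for y
  have ch: "continuous_on {-1..1} h"
    unfolding h_def
  proof (rule continuous_on_compose2[OF cH])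
    show "continuous_on {-1..1} (\<lambda>y. arccos y / (2*pi))"
      by (intro continuous_intros continuous_on_arccos') auto
    show "(\<lambda>y. arccos y / (2*pi)) ` {-1..1} \<subseteq> II"
    proof
      fix z assume "z \<in> (\<lambda>y. arccos y / (2*pi)) ` {-1..1}"
      then obtain y where y: "y \<in> {-1..1}" "z = arccos y / (2*pi)" by auto
      have "0 \<le> arccos y" "arccos y \<le> pi" using y by (auto intro: arccos_lbound arccos_ubound)
      then have "arccos y / (2*pi) \<le> pi / (2*pi)" "arccos y / (2*pi) \<ge> 0"
        by (auto intro: divide_right_mono)
      then show "z \<in> II" using y pi_gt_zero by simp
    qed
  qed
  have hc: "h (cos (2*pi*x)) = H x" if x: "x \<in> II" for x
  proof -
    have "\<bar>2*pi*x\<bar> \<le> pi" using x pi_gt_zero by (auto simp: abs_mult abs_le_iff field_simps)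
    then have "arccos (cos (2*pi*x)) = \<bar>2*pi*x\<bar>" by (rule arccos_cos_eq_abs)
    then have "h (cos (2*pi*x)) = H \<bar>x\<bar>" unfolding h_def using pi_gt_zero by (simp add: abs_mult)
    also have "\<dots> = H x" using ev[OF x] by (cases "x \<ge> 0") auto
    finally show ?thesis .
  qed
  obtain B where B: "B > 0" "\<And>x. x \<in> II \<Longrightarrow> \<bar>H x\<bar> \<le> B"
  proof -
    have "bounded (H ` II)" by (rule compact_imp_bounded[OF compact_continuous_image[OF cH]]) simp
    then obtain B0 where "\<And>x. x \<in> II \<Longrightarrow> norm (H x) \<le> B0" unfolding bounded_iff by blast
    then show ?thesis by (intro that[of "\<bar>B0\<bar> + 1"]) force+
  qed
  define J where "J = integral II (\<lambda>x. H x * H x)"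
  have Jle: "\<bar>J\<bar> \<le> B * e" if e: "e > 0" for e
  proof -
    obtain g where g: "real_polynomial_function g" "\<And>y. y \<in> {-1..1} \<Longrightarrow> \<bar>h y - g y\<bar> < e"
      using Stone_Weierstrass_real_polynomial_function[OF _ ch e] by auto
    then obtain a n where gs: "g = (\<lambda>y. \<Sum>i\<le>n. a i * y^i)" by (auto simp: real_polynomial_function_iff_sum)
    have cg: "continuous_on II (\<lambda>x. g (cos (2*pi*x)))"
      unfolding gs by (intro continuous_intros)
    have i0: "integral II (\<lambda>x. H x * g (cos (2*pi*x))) = 0"
      unfolding gs by (rule U2[OF cH z])
    have "J = integral II (\<lambda>x. H x * (H x - g (cos (2*pi*x))) + H x * g (cos (2*pi*x)))"
      unfolding J_def by (simp add: algebra_simps)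
    also have "\<dots> = integral II (\<lambda>x. H x * (H x - g (cos (2*pi*x)))) + integral II (\<lambda>x. H x * g (cos (2*pi*x)))"
      by (intro integral_add integrable_continuous_interval continuous_intros cH cg)
    finally have "J = integral II (\<lambda>x. H x * (H x - g (cos (2*pi*x))))" using i0 by simp
    also have "norm \<dots> \<le> (B * e) * (1/2 - (-(1/2)))"
    proof (rule integral_bound)
      show "continuous_on II (\<lambda>x. H x * (H x - g (cos (2*pi*x))))"
        by (intro continuous_intros cH cg)
      fix x assume x: "x \<in> II"
      have "\<bar>H x - g (cos (2*pi*x))\<bar> \<le> e"
        using g(2)[of "cos (2*pi*x)"] hc[OF x] by auto
      then have "\<bar>H x\<bar> * \<bar>H x - g (cos (2*pi*x))\<bar> \<le> B * e"
        using B(2)[OF x] e by (intro mult_mono) auto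
      then show "norm (H x * (H x - g (cos (2*pi*x)))) \<le> B * e"
        by (simp add: abs_mult)
    qed simp
    finally show ?thesis by simp
  qed
  have J0: "J = 0"
  proof (rule ccontr)
    assume "J \<noteq> 0"
    then have "\<bar>J\<bar> > 0" by simp
    have "\<bar>J\<bar> \<le> B * (\<bar>J\<bar> / (2*B))" using Jle[of "\<bar>J\<bar> / (2*B)"] B \<open>\<bar>J\<bar> > 0\<close> by simp
    then show False using B \<open>\<bar>J\<bar> > 0\<close> by (simp add: field_simps)
  qed
  have "(\<lambda>x. H x * H x) integrable_on II" by (intro integrable_continuous_interval continuous_intros cH)
  then have "((\<lambda>x. H x * H x) has_integral J) II" unfolding J_def by (rule integrable_integral)
  then have "((\<lambda>x. H x * H x) has_integral 0) (cbox (-(1/2)) (1/2))" using J0 by (simp add: cbox_interval)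
  then have "H 0 * H 0 = 0"
    by (rule has_integral_0_cbox_imp_0[rotated 2]) (auto intro: continuous_on_mult cH)
  then show ?thesis by simp
qed


lemma cos_int_integral:
  fixes j :: int
  shows "((\<lambda>x. cos (2*pi* of_int j*x)) has_integral (if j = 0 then 1 else 0)) II"
proof (cases "j = 0")
  case True
  then show ?thesis using has_integral_const_real[of "1::real" "-(1/2)" "1/2"] by simp
next
  case False
  let ?f = "\<lambda>x. sin (2*pi* of_int j*x) / (2*pi* of_int j)"
  have "((\<lambda>x. cos (2*pi* of_int j*x)) has_integral (?f (1/2) - ?f (-(1/2)))) II"
  proof (rule fundamental_theorem_of_calculus)
    fix x :: real
    have "(?f has_real_derivative cos (2*pi* of_int j*x) * (2*pi* of_int j) / (2*pi* of_int j)) (at x within II)"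
      by (auto intro!: derivative_eq_intros)
    then show "(?f has_vector_derivative cos (2*pi* of_int j*x)) (at x within II)"
      using False by (simp add: has_real_derivative_iff_has_vector_derivative[symmetric])
  qed simp
  moreover have "sin (2*pi* of_int j*(1/2)) = 0" "sin (2*pi* of_int j*(-(1/2))) = 0"
  proof -
    have "sin (of_int j * pi) = 0" by (simp add: sin_times_pi_eq_0)
    moreover have "sin (- (of_int j * pi)) = 0" using calculation by simp
    ultimately show "sin (2*pi* of_int j*(1/2)) = 0" "sin (2*pi* of_int j*(-(1/2))) = 0"
      by (simp_all add: algebra_simps)
  qed
  ultimately show ?thesis using False by simp
qed

lemma cos_cos_integral:
  fixes n m :: nat
  shows "((\<lambda>x. cos (2*pi*real n*x) * cos (2*pi*real m*x)) has_integral
          (if n = m then (if m = 0 then 1 else 1/2) else 0)) II"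
proof -
  have eq: "cos (2*pi*real n*x) * cos (2*pi*real m*x) =
     (1/2) * cos (2*pi* of_int (int n - int m)*x) + (1/2) * cos (2*pi* of_int (int n + int m)*x)" for x
    by (subst cos_times_cos) (simp add: algebra_simps add_divide_distrib)
  have "((\<lambda>x. (1/2) * cos (2*pi* of_int (int n - int m)*x) + (1/2) * cos (2*pi* of_int (int n + int m)*x)) has_integral
     ((1/2) * (if int n - int m = 0 then 1 else 0) + (1/2) * (if int n + int m = 0 then 1 else 0))) II"
    by (intro has_integral_add has_integral_cmult_real cos_int_integral)
  moreover have v: "((1/2) * (if int n - int m = 0 then 1 else 0) + (1/2) * (if int n + int m = 0 then 1 else 0)) =
     (if n = m then (if m = 0 then 1 else 1/2) else (0::real))" by auto
  ultimately have h: "((\<lambda>x. (1/2) * cos (2*pi* of_int (int n - int m)*x) + (1/2) * cos (2*pi* of_int (int n + int m)*x)) has_integral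
     (if n = m then (if m = 0 then 1 else 1/2) else (0::real))) II" by simp
  have ee: "(\<lambda>x. cos (2*pi*real n*x) * cos (2*pi*real m*x)) = (\<lambda>x. (1/2) * cos (2*pi* of_int (int n - int m)*x) + (1/2) * cos (2*pi* of_int (int n + int m)*x))"
    by (rule ext) (rule eq)
  show ?thesis unfolding ee by (rule h)
qed

lemma series_has_integral:
  fixes f :: "nat \<Rightarrow> real \<Rightarrow> real"
  assumes cont: "\<And>n. continuous_on II (f n)"
    and bound: "\<And>n x. x \<in> II \<Longrightarrow> norm (f n x) \<le> M n" and M: "summable M"
    and ci: "\<And>n. (f n has_integral c n) II"
    and L: "(\<lambda>N. \<Sum>n<N. c n) \<longlonglongrightarrow> L"
  shows "((\<lambda>x. \<Sum>n. f n x) has_integral L) II"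
proof -
  have u: "uniform_limit (cbox (-(1/2)) (1/2)) (\<lambda>N x. \<Sum>n<N. f n x) (\<lambda>x. \<Sum>n. f n x) sequentially"
  proof -
    have "uniform_limit II (\<lambda>N x. \<Sum>n<N. f n x) (\<lambda>x. \<Sum>n. f n x) sequentially"
      by (rule Weierstrass_m_test) (use bound M in auto)
    then show ?thesis by (simp add: cbox_interval)
  qed
  have c: "continuous_on (cbox (-(1/2)) (1/2)) (\<lambda>x. \<Sum>n<N. f n x)" for N
    unfolding cbox_interval by (intro continuous_on_sum cont)
  obtain I J where I: "\<And>N. ((\<lambda>x. \<Sum>n<N. f n x) has_integral I N) (cbox (-(1/2)) (1/2))"
    and J: "((\<lambda>x. \<Sum>n. f n x) has_integral J) (cbox (-(1/2)) (1/2))" and IJ: "I \<longlonglongrightarrow> J"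
    by (rule uniform_limit_integral_cbox[OF u c]) auto
  have "((\<lambda>x. \<Sum>n<N. f n x) has_integral (\<Sum>n<N. c n)) II" for N
    by (intro has_integral_sum ci) auto
  then have "I N = (\<Sum>n<N. c n)" for N using I[of N] unfolding cbox_interval by (metis has_integral_unique)
  then have "I = (\<lambda>N. \<Sum>n<N. c n)" by (rule ext)
  then have "J = L" using IJ L LIMSEQ_unique by auto
  then show ?thesis using J by (simp add: cbox_interval)
qed


lemma std_cos_integral:
  "integrable lborel (\<lambda>x. std_normal_density x * cos (w * x)) \<and>
   (\<integral>x. std_normal_density x * cos (w * x) \<partial>lborel) = exp (- (w^2) / 2)"
proof -
  have meas: "(\<lambda>x. iexp (w * x)) \<in> borel_measurable lborel" by measurable
  have intc: "integrable lborel (\<lambda>x. std_normal_density x *\<^sub>R iexp (w * x))"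
    by (rule Bochner_Integration.integrable_bound[of _ "std_normal_density"])
       (auto simp: norm_mult)
  have "char std_normal_distribution w = (\<integral>x. std_normal_density x *\<^sub>R iexp (w * x) \<partial>lborel)"
    unfolding char_def by (subst integral_density) (auto simp: meas)
  then have e: "(\<integral>x. std_normal_density x *\<^sub>R iexp (w * x) \<partial>lborel) = complex_of_real (exp (- (w^2) / 2))"
    using char_std_normal_distribution by simp
  have intr: "integrable lborel (\<lambda>x. std_normal_density x * cos (w * x))"
    by (rule Bochner_Integration.integrable_bound[of _ "std_normal_density"]) (auto simp: abs_mult intro!: AE_I2 mult_left_le)
  have "(\<integral>x. std_normal_density x * cos (w * x) \<partial>lborel) = (\<integral>x. Re (std_normal_density x *\<^sub>R iexp (w * x)) \<partial>lborel)"
    by (simp add: cos_exp_eq Re_exp)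
  also have "\<dots> = Re (\<integral>x. std_normal_density x *\<^sub>R iexp (w * x) \<partial>lborel)"
    using intc by (rule integral_Re)
  also have "\<dots> = exp (- (w^2) / 2)" using e by simp
  finally show ?thesis using intr by simp
qed

lemma gauss_cos:
  fixes s m :: real
  assumes s: "s > 0"
  shows "integrable lborel (\<lambda>x. exp (- pi * s * x^2) * cos (2 * pi * m * x)) \<and>
         (\<integral>x. exp (- pi * s * x^2) * cos (2 * pi * m * x) \<partial>lborel) = exp (- pi * (m^2) / s) / sqrt s"
proof -
  define f where "f x = exp (- pi * s * x^2) * cos (2 * pi * m * x)" for x
  define c where "c = 1 / sqrt (2 * pi * s)"
  define w where "w = 2 * pi * m * c"
  have c: "c > 0" using s by (simp add: c_def)
  have c2: "c^2 = 1 / (2 * pi * s)" using s by (simp add: c_def power_divide)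
  have fc: "f (0 + c * x) = sqrt (2 * pi) * (std_normal_density x * cos (w * x))" for x
  proof -
    have "pi * s * (c * x)^2 = x^2 / 2" using s by (simp add: power_mult_distrib c2)
    then have "exp (- pi * s * (c * x)^2) = exp (- (x^2) / 2)" by simp
    moreover have "sqrt (2 * pi) * std_normal_density x = exp (- (x^2) / 2)"
      by (simp add: normal_density_def)
    ultimately show ?thesis unfolding f_def w_def by (simp add: algebra_simps)
  qed
  note sc = std_cos_integral[of w]
  have ic: "integrable lborel (\<lambda>x. f (0 + c * x))"
    unfolding fc using sc by simp
  have intf: "integrable lborel f"
    using ic lborel_integrable_real_affine_iff[of c f 0] c by simp
  have "(\<integral>x. f x \<partial>lborel) = \<bar>c\<bar> *\<^sub>R (\<integral>x. f (0 + c * x) \<partial>lborel)"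
    by (rule lborel_integral_real_affine) (use c in simp)
  also have "\<dots> = c * (sqrt (2 * pi) * exp (- (w^2) / 2))"
    unfolding fc using c sc by simp
  also have "\<dots> = exp (- pi * (m^2) / s) / sqrt s"
  proof -
    have "c * sqrt (2 * pi) = 1 / sqrt s" using s by (simp add: c_def real_sqrt_mult)
    moreover have "w^2 / 2 = pi * m^2 / s"
      unfolding w_def power_mult_distrib c2 using s pi_gt_zero by (simp add: field_simps power2_eq_square)
    moreover have "- (w^2) / 2 = - pi * (m^2) / s"
      using calculation(2) by (simp add: minus_divide_left[symmetric])
    ultimately have "c * (sqrt (2 * pi) * exp (- (w^2) / 2)) = (1 / sqrt s) * exp (- pi * (m^2) / s)"
      by (simp only: mult.assoc[symmetric])
    then show ?thesis by simp
  qed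
  finally show ?thesis using intf unfolding f_def by simp
qed


definition ga :: "real \<Rightarrow> real \<Rightarrow> real" where "ga s x = exp (- pi * s * x^2)"

definition GG :: "real \<Rightarrow> nat \<Rightarrow> real \<Rightarrow> real" where
  "GG s m y = ga s y * cos (2 * pi * real m * y)"

lemma cont_GG: "continuous_on A (GG s m)"
  unfolding GG_def ga_def by (intro continuous_intros)

lemma lim_sym_integral:
  fixes f :: "real \<Rightarrow> real"
  assumes f: "integrable lborel f" and cf: "continuous_on UNIV f"
  shows "(\<lambda>N. integral {-(real N + 1/2)..real N + 1/2} f) \<longlonglongrightarrow> (\<integral>x. f x \<partial>lborel)"
proof -
  have eq: "integral {-(real N + 1/2)..real N + 1/2} f = (\<integral>x. indicator {-(real N + 1/2)..real N + 1/2} x *\<^sub>R f x \<partial>lborel)" for N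
  proof -
    have "set_integrable lborel {-(real N + 1/2)..real N + 1/2} f"
      unfolding set_integrable_def by (rule integrable_mult_indicator) (auto intro: f)
    then show ?thesis using set_borel_integral_eq_integral(2) by (metis set_lebesgue_integral_def)
  qed
  show ?thesis unfolding eq
  proof (rule integral_dominated_convergence[where w="\<lambda>x. norm (f x)"])
    show "f \<in> borel_measurable lborel" using f by (rule borel_measurable_integrable)
    show "(\<lambda>x. indicator {-(real N + 1/2)..real N + 1/2} x *\<^sub>R f x) \<in> borel_measurable lborel" for N
      using f by (intro borel_measurable_integrable integrable_mult_indicator) auto
    show "integrable lborel (\<lambda>x. norm (f x))" using f by (rule integrable_norm)
    show "AE x in lborel. (\<lambda>N. indicator {-(real N + 1/2)..real N + 1/2} x *\<^sub>R f x) \<longlonglongrightarrow> f x"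
    proof (rule AE_I2)
      fix x :: real
      obtain N0 :: nat where "\<bar>x\<bar> \<le> real N0" using real_arch_simple by blast
      then have "\<forall>N\<ge>N0. indicator {-(real N + 1/2)..real N + 1/2} x *\<^sub>R f x = f x"
        by (auto simp: indicator_def abs_le_iff)
      then show "(\<lambda>N. indicator {-(real N + 1/2)..real N + 1/2} x *\<^sub>R f x) \<longlonglongrightarrow> f x"
        by (intro tendsto_eventually) (auto simp: eventually_sequentially)
    qed
    show "AE x in lborel. norm (indicator {-(real N + 1/2)..real N + 1/2} x *\<^sub>R f x) \<le> norm (f x)" for N
      by (rule AE_I2) (auto simp: indicator_def)
  qed
qed

lemma shift_integral:
  fixes k :: int
  shows "integral II (\<lambda>x. ga s (x + of_int k) * cos (2 * pi * real m * x)) = integral {of_int k - 1/2..of_int k + 1/2} (GG s m)"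
proof -
  have "integral {(of_int k - 1/2) - of_int k..(of_int k + 1/2) - of_int k} (\<lambda>x. GG s m (x + of_int k)) = integral {of_int k - 1/2..of_int k + 1/2} (GG s m)"
    by (rule integral_shift_real_ivl)
  moreover have "GG s m (x + of_int k) = ga s (x + of_int k) * cos (2 * pi * real m * x)" for x
  proof -
    have "cos (2 * pi * real m * (x + of_int k)) = cos (2 * pi * real m * x + (2 * pi) * of_int (int m * k))"
      by (simp add: algebra_simps)
    also have "\<dots> = cos (2 * pi * real m * x) * cos ((2 * pi) * of_int (int m * k)) - sin (2 * pi * real m * x) * sin ((2 * pi) * of_int (int m * k))"
      by (rule cos_add)
    also have "\<dots> = cos (2 * pi * real m * x)"
      using cos_int_2pin[of "int m * k"] sin_int_2pin[of "int m * k"] by simp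
    finally show ?thesis unfolding GG_def by simp
  qed
  ultimately show ?thesis by simp
qed

definition pt :: "real \<Rightarrow> nat \<Rightarrow> real \<Rightarrow> real" where
  "pt s n x = ga s (x + real (Suc n)) + ga s (x - real (Suc n))"

lemma int_GG: "GG s m integrable_on {a..b}"
  by (intro integrable_continuous_interval cont_GG)

lemma pt_int:
  "integral II (\<lambda>x. pt s n x * cos (2 * pi * real m * x)) =
   integral {real n + 1/2..real (Suc n) + 1/2} (GG s m) + integral {-(real (Suc n) + 1/2)..-(real n + 1/2)} (GG s m)"
proof -
  have i1: "(\<lambda>x. ga s (x + of_int (int (Suc n))) * cos (2 * pi * real m * x)) integrable_on II"
    unfolding ga_def by (intro integrable_continuous_interval continuous_intros)
  have i2: "(\<lambda>x. ga s (x + of_int (- int (Suc n))) * cos (2 * pi * real m * x)) integrable_on II"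
    unfolding ga_def by (intro integrable_continuous_interval continuous_intros)
  have "integral II (\<lambda>x. pt s n x * cos (2 * pi * real m * x)) =
     integral II (\<lambda>x. ga s (x + of_int (int (Suc n))) * cos (2 * pi * real m * x) + ga s (x + of_int (- int (Suc n))) * cos (2 * pi * real m * x))"
    unfolding pt_def by (simp add: algebra_simps)
  also have "\<dots> = integral II (\<lambda>x. ga s (x + of_int (int (Suc n))) * cos (2 * pi * real m * x)) + integral II (\<lambda>x. ga s (x + of_int (- int (Suc n))) * cos (2 * pi * real m * x))"
    by (rule integral_add[OF i1 i2])
  also have "\<dots> = integral {of_int (int (Suc n)) - 1/2..of_int (int (Suc n)) + 1/2} (GG s m) + integral {of_int (- int (Suc n)) - 1/2..of_int (- int (Suc n)) + 1/2} (GG s m)"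
    by (simp only: shift_integral)
  also have "{of_int (int (Suc n)) - 1/2..of_int (int (Suc n)) + 1/2} = {real n + 1/2..real (Suc n) + 1/2::real}" by simp
  also have "{of_int (- int (Suc n)) - 1/2..of_int (- int (Suc n)) + 1/2} = {-(real (Suc n) + 1/2)..-(real n + 1/2)::real}" by simp
  finally show ?thesis .
qed

lemma additivity:
  "integral II (GG s m) + (\<Sum>n<N. integral II (\<lambda>x. pt s n x * cos (2 * pi * real m * x))) =
   integral {-(real N + 1/2)..real N + 1/2} (GG s m)"
proof (induction N)
  case 0 then show ?case by simp
next
  case (Suc N)
  let ?a = "real N + 1/2" and ?b = "real (Suc N) + 1/2"
  have "integral {-?b..?b} (GG s m) = integral {-?b..-?a} (GG s m) + integral {-?a..?b} (GG s m)"
    by (rule Henstock_Kurzweil_Integration.integral_combine[where a="-?b" and c="-?a" and b="?b", symmetric]) (auto intro: int_GG)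
  also have "integral {-?a..?b} (GG s m) = integral {-?a..?a} (GG s m) + integral {?a..?b} (GG s m)"
    by (rule Henstock_Kurzweil_Integration.integral_combine[where a="-?a" and c="?a" and b="?b", symmetric]) (auto intro: int_GG)
  finally have A: "integral {-?b..?b} (GG s m) = integral {-?b..-?a} (GG s m) + (integral {-?a..?a} (GG s m) + integral {?a..?b} (GG s m))" .
  show ?case unfolding sum.lessThan_Suc using Suc.IH pt_int[of s N m] A by linarith
qed

definition Fp :: "real \<Rightarrow> real \<Rightarrow> real" where
  "Fp s x = ga s x + (\<Sum>n. pt s n x)"

lemma sq_bound:
  fixes x :: real assumes x: "x \<in> II"
  shows "real n \<le> (x + real (Suc n))^2" "real n \<le> (x - real (Suc n))^2"
proof -
  have h: "real n \<le> (real n + 1/2)^2" by (simp add: power2_eq_square algebra_simps)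
  have "real n + 1/2 \<le> x + real (Suc n)" using x by auto
  then have "(real n + 1/2)^2 \<le> (x + real (Suc n))^2" by (rule power_mono) simp
  then show "real n \<le> (x + real (Suc n))^2" using h by linarith
  have "real n + 1/2 \<le> real (Suc n) - x" using x by auto
  then have "(real n + 1/2)^2 \<le> (real (Suc n) - x)^2" by (rule power_mono) simp
  then show "real n \<le> (x - real (Suc n))^2" using h by (simp add: power2_commute)
qed

lemma ga_le:
  assumes s: "s > 0" and "real n \<le> y^2"
  shows "ga s y \<le> exp (- pi * s) ^ n"
proof -
  have "pi * s * real n \<le> pi * s * y^2" using assms by (intro mult_left_mono) auto
  then have "ga s y \<le> exp (real n * (- pi * s))" unfolding ga_def by (simp add: algebra_simps)
  also have "exp (real n * (- pi * s)) = exp (- pi * s) ^ n" by (rule exp_of_nat_mult)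
  finally show ?thesis .
qed

lemma pt_bound:
  assumes s: "s > 0" and x: "x \<in> II"
  shows "norm (pt s n x * cos (2 * pi * real m * x)) \<le> 2 * exp (- pi * s) ^ n"
proof -
  have "pt s n x \<le> 2 * exp (- pi * s) ^ n"
    unfolding pt_def using ga_le[OF s sq_bound(1)[OF x, of n]] ga_le[OF s sq_bound(2)[OF x, of n]] by linarith
  moreover have "pt s n x \<ge> 0" by (simp add: pt_def ga_def add_nonneg_nonneg)
  moreover have "\<bar>cos (2 * pi * real m * x)\<bar> \<le> 1" by simp
  ultimately have "pt s n x * \<bar>cos (2 * pi * real m * x)\<bar> \<le> 2 * exp (- pi * s) ^ n"
    by (metis mult_left_le order_trans)
  then show ?thesis by (simp add: abs_mult \<open>pt s n x \<ge> 0\<close>)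
qed

lemma geom2: "s > 0 \<Longrightarrow> summable (\<lambda>n. 2 * exp (- pi * s) ^ n)"
  by (intro summable_mult summable_geometric) auto

lemma CF:
  assumes s: "s > 0"
  shows "((\<lambda>x. Fp s x * cos (2 * pi * real m * x)) has_integral (exp (- pi * (real m)^2 / s) / sqrt s)) II"
proof -
  define \<gamma> where "\<gamma> = exp (- pi * (real m)^2 / s) / sqrt s"
  note gc = gauss_cos[OF s, of "real m"]
  have GGe: "GG s m = (\<lambda>x. exp (- pi * s * x^2) * cos (2 * pi * real m * x))"
    by (auto simp: GG_def ga_def)
  have gi: "integrable lborel (GG s m)" "(\<integral>x. GG s m x \<partial>lborel) = \<gamma>"
    using gc unfolding GGe \<gamma>_def by auto
  have lim: "(\<lambda>N. integral {-(real N + 1/2)..real N + 1/2} (GG s m)) \<longlonglongrightarrow> \<gamma>"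
    using lim_sym_integral[OF gi(1) cont_GG] gi(2) by simp
  define c where "c n = integral II (\<lambda>x. pt s n x * cos (2 * pi * real m * x))" for n
  have ser: "((\<lambda>x. \<Sum>n. pt s n x * cos (2 * pi * real m * x)) has_integral (\<gamma> - integral II (GG s m))) II"
  proof (rule series_has_integral)
    show "continuous_on II (\<lambda>x. pt s n x * cos (2 * pi * real m * x))" for n
      unfolding pt_def ga_def by (intro continuous_intros)
    show "\<And>n x. x \<in> II \<Longrightarrow> norm (pt s n x * cos (2 * pi * real m * x)) \<le> 2 * exp (- pi * s) ^ n"
      by (rule pt_bound[OF s])
    show "summable (\<lambda>n. 2 * exp (- pi * s) ^ n)" using s by (rule geom2)
    show "((\<lambda>x. pt s n x * cos (2 * pi * real m * x)) has_integral c n) II" for n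
      unfolding c_def pt_def ga_def by (intro integrable_integral integrable_continuous_interval continuous_intros)
    have "(\<Sum>n<N. c n) = integral {-(real N + 1/2)..real N + 1/2} (GG s m) - integral II (GG s m)" for N
      using additivity[of s m N] unfolding c_def by simp
    then show "(\<lambda>N. \<Sum>n<N. c n) \<longlonglongrightarrow> \<gamma> - integral II (GG s m)"
      using lim by (simp add: tendsto_diff)
  qed
  have g: "(GG s m has_integral integral II (GG s m)) II"
    by (intro integrable_integral int_GG)
  have "((\<lambda>x. GG s m x + (\<Sum>n. pt s n x * cos (2 * pi * real m * x))) has_integral (integral II (GG s m) + (\<gamma> - integral II (GG s m)))) II"
    by (rule has_integral_add[OF g ser])
  then have h: "((\<lambda>x. GG s m x + (\<Sum>n. pt s n x * cos (2 * pi * real m * x))) has_integral \<gamma>) II" by simp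
  show ?thesis unfolding \<gamma>_def[symmetric]
  proof (rule has_integral_eq[OF _ h])
    fix x assume x: "x \<in> II"
    have "summable (\<lambda>n. pt s n x)"
    proof (rule summable_comparison_test'[OF geom2[OF s], of 0])
      fix n :: nat
      show "norm (pt s n x) \<le> 2 * exp (- pi * s) ^ n"
        using pt_bound[OF s x, of n 0] by simp
    qed
    then show "GG s m x + (\<Sum>n. pt s n x * cos (2 * pi * real m * x)) = Fp s x * cos (2 * pi * real m * x)"
      unfolding Fp_def GG_def by (simp add: suminf_mult2 distrib_right)
  qed
qed


definition gt :: "real \<Rightarrow> nat \<Rightarrow> real \<Rightarrow> real" where
  "gt s n x = 2 * ga (1/s) (real (Suc n)) * cos (2 * pi * real (Suc n) * x)"

definition Gc :: "real \<Rightarrow> real \<Rightarrow> real" where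
  "Gc s x = (1 + (\<Sum>n. gt s n x)) / sqrt s"

lemma ga_nonneg: "ga s y \<ge> 0" by (simp add: ga_def)

lemma gt_bound:
  assumes s: "s > 0"
  shows "norm (gt s n x * cos (2 * pi * real m * x)) \<le> 2 * exp (- pi * (1/s)) ^ n"
proof -
  have "real (Suc n) \<le> real (Suc n)^2" by (simp add: power2_eq_square)
  then have "real n \<le> (real (Suc n))^2" by linarith
  then have g: "ga (1/s) (real (Suc n)) \<le> exp (- pi * (1/s)) ^ n" using s by (intro ga_le) auto
  have g0: "ga (1/s) (real (Suc n)) \<ge> 0" by (simp add: ga_def)
  have "\<bar>cos (2 * pi * real (Suc n) * x) * cos (2 * pi * real m * x)\<bar> \<le> 1"
    by (simp add: abs_mult mult_le_one)
  then have "ga (1/s) (real (Suc n)) * \<bar>cos (2 * pi * real (Suc n) * x) * cos (2 * pi * real m * x)\<bar> \<le> exp (- pi * (1/s)) ^ n"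
    using g g0 by (metis mult_left_le order_trans)
  then show ?thesis unfolding gt_def by (simp add: abs_mult abs_of_nonneg[OF ga_nonneg])
qed

lemma gt_summable:
  assumes s: "s > 0" shows "summable (\<lambda>n. gt s n x)"
proof (rule summable_comparison_test'[OF geom2[of "1/s"], of 0])
  show "0 < 1/s" using s by simp
  fix n :: nat
  show "norm (gt s n x) \<le> 2 * exp (- pi * (1/s)) ^ n"
    using gt_bound[OF s, of n x 0] by simp
qed

lemma CG:
  assumes s: "s > 0"
  shows "((\<lambda>x. Gc s x * cos (2 * pi * real m * x)) has_integral (exp (- pi * (real m)^2 / s) / sqrt s)) II"
proof -
  define a where "a = ga (1/s) (real m)"
  define c where "c n = (if Suc n = m then a else 0)" for n
  have ser: "((\<lambda>x. \<Sum>n. gt s n x * cos (2 * pi * real m * x)) has_integral (if m = 0 then 0 else a)) II"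
  proof (rule series_has_integral)
    show "continuous_on II (\<lambda>x. gt s n x * cos (2 * pi * real m * x))" for n
      unfolding gt_def by (intro continuous_intros)
    show "\<And>n x. x \<in> II \<Longrightarrow> norm (gt s n x * cos (2 * pi * real m * x)) \<le> 2 * exp (- pi * (1/s)) ^ n"
      by (rule gt_bound[OF s])
    show "summable (\<lambda>n. 2 * exp (- pi * (1/s)) ^ n)" using s by (intro geom2) simp
    show "((\<lambda>x. gt s n x * cos (2 * pi * real m * x)) has_integral c n) II" for n
    proof -
      have "((\<lambda>x. (2 * ga (1/s) (real (Suc n))) * (cos (2 * pi * real (Suc n) * x) * cos (2 * pi * real m * x))) has_integral
         (2 * ga (1/s) (real (Suc n))) * (if Suc n = m then (if m = 0 then 1 else 1/2) else 0)) II"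
        by (intro has_integral_cmult_real cos_cos_integral)
      moreover have "(2 * ga (1/s) (real (Suc n))) * (if Suc n = m then (if m = 0 then 1 else 1/2) else 0) = c n"
        unfolding c_def a_def by auto
      ultimately show ?thesis unfolding gt_def by (simp add: algebra_simps)
    qed
    show "(\<lambda>N. \<Sum>n<N. c n) \<longlonglongrightarrow> (if m = 0 then 0 else a)"
    proof (cases m)
      case 0 then show ?thesis by (simp add: c_def)
    next
      case (Suc k)
      have "(\<Sum>n<N. c n) = (if k < N then a else 0)" for N
        unfolding c_def Suc by (simp add: sum.delta)
      then have "\<forall>N\<ge>Suc k. (\<Sum>n<N. c n) = a" by auto
      then show ?thesis using Suc by (intro tendsto_eventually) (auto simp: eventually_sequentially)
    qed
  qed
  have h0: "((\<lambda>x. cos (2 * pi * real (0::nat) * x) * cos (2 * pi * real m * x)) has_integral (if 0 = m then 1 else 0)) II"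
  proof -
    have v: "(if (0::nat) = m then (if m = 0 then 1 else 1/2) else 0) = (if 0 = m then 1 else (0::real))" by auto
    show ?thesis using cos_cos_integral[of 0 m] unfolding v .
  qed
  have hh: "((\<lambda>x. (1 / sqrt s) * (cos (2 * pi * real (0::nat) * x) * cos (2 * pi * real m * x) + (\<Sum>n. gt s n x * cos (2 * pi * real m * x))))
     has_integral (1 / sqrt s) * ((if 0 = m then 1 else 0) + (if m = 0 then 0 else a))) II"
    by (intro has_integral_cmult_real has_integral_add h0 ser)
  have vv: "(1 / sqrt s) * ((if 0 = m then 1 else 0) + (if m = 0 then 0 else a)) = exp (- pi * (real m)^2 / s) / sqrt s"
    unfolding a_def ga_def by auto
  have h: "((\<lambda>x. (1 / sqrt s) * (cos (2 * pi * real (0::nat) * x) * cos (2 * pi * real m * x) + (\<Sum>n. gt s n x * cos (2 * pi * real m * x))))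
     has_integral exp (- pi * (real m)^2 / s) / sqrt s) II" using hh unfolding vv .
  show ?thesis
  proof (rule has_integral_eq[OF _ h])
    fix x
    show "(1 / sqrt s) * (cos (2 * pi * real (0::nat) * x) * cos (2 * pi * real m * x) + (\<Sum>n. gt s n x * cos (2 * pi * real m * x)))
       = Gc s x * cos (2 * pi * real m * x)"
      unfolding Gc_def using gt_summable[OF s, of x] by (simp add: suminf_mult2 algebra_simps add_divide_distrib)
  qed
qed


lemma series_cont:
  fixes f :: "nat \<Rightarrow> real \<Rightarrow> real"
  assumes cont: "\<And>n. continuous_on S (f n)"
    and bound: "\<And>n x. x \<in> S \<Longrightarrow> norm (f n x) \<le> M n" and M: "summable M"
  shows "continuous_on S (\<lambda>x. \<Sum>n. f n x)"
proof (rule uniform_limit_theorem)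
  show "uniform_limit S (\<lambda>N x. \<Sum>n<N. f n x) (\<lambda>x. \<Sum>n. f n x) sequentially"
    by (rule Weierstrass_m_test) (use bound M in auto)
  show "\<forall>\<^sub>F N in sequentially. continuous_on S (\<lambda>x. \<Sum>n<N. f n x)"
    by (intro always_eventually allI continuous_on_sum cont)
qed simp

lemma FE_at:
  assumes s: "s > 0"
  shows "1 + 2 * EE 0 s = (1 + 2 * EE 0 (1/s)) / sqrt s"
proof -
  have ptb: "norm (pt s n x) \<le> 2 * exp (- pi * s) ^ n" if "x \<in> II" for n x
    using pt_bound[OF s that, of n 0] by simp
  have gtb: "norm (gt s n x) \<le> 2 * exp (- pi * (1/s)) ^ n" for n x
    using gt_bound[OF s, of n x 0] by simp
  have cF: "continuous_on II (Fp s)"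
    unfolding Fp_def[abs_def]
    by (intro continuous_intros series_cont[OF _ ptb geom2[OF s]]) (auto simp: pt_def ga_def intro!: continuous_intros)
  have cG: "continuous_on II (Gc s)"
    unfolding Gc_def[abs_def] using s
    by (intro continuous_intros series_cont[OF _ gtb geom2]) (auto simp: gt_def ga_def intro!: continuous_intros)
  define H where "H x = Fp s x - Gc s x" for x
  have cH: "continuous_on II H" unfolding H_def[abs_def] by (intro continuous_intros cF cG)
  have ev: "H (-x) = H x" for x
  proof -
    have gae: "ga s (-y) = ga s y" for y unfolding ga_def by simp
    have "pt s n (-x) = pt s n x" for n
    proof -
      have e1: "-x + real (Suc n) = -(x - real (Suc n))" "-x - real (Suc n) = -(x + real (Suc n))" by simp_all
      have "pt s n (-x) = ga s (-x + real (Suc n)) + ga s (-x - real (Suc n))" by (simp only: pt_def)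
      also have "\<dots> = ga s (x - real (Suc n)) + ga s (x + real (Suc n))" by (simp only: e1 gae)
      finally show ?thesis unfolding pt_def by simp
    qed
    moreover have "gt s n (-x) = gt s n x" for n unfolding gt_def by simp
    moreover have "ga s (-x) = ga s x" unfolding ga_def by simp
    ultimately show ?thesis unfolding H_def Fp_def Gc_def by simp
  qed
  have z: "integral II (\<lambda>x. H x * cos (2*pi*real m*x)) = 0" for m :: nat
  proof -
    have "((\<lambda>x. Fp s x * cos (2*pi*real m*x) - Gc s x * cos (2*pi*real m*x)) has_integral
           (exp (- pi * (real m)^2 / s) / sqrt s - exp (- pi * (real m)^2 / s) / sqrt s)) II"
      by (intro has_integral_diff CF CG s)
    then show ?thesis unfolding H_def by (simp add: algebra_simps integral_unique)
  qed
  have "H 0 = 0" by (rule uniq[OF cH _ z]) (use ev in auto)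
  then have e: "Fp s 0 = Gc s 0" unfolding H_def by simp
  have "Fp s 0 = 1 + 2 * EE 0 s"
  proof -
    have "pt s n 0 = 2 * tt 0 s n" for n unfolding pt_def ga_def tt_def by (simp add: algebra_simps power2_eq_square)
    then have "(\<Sum>n. pt s n 0) = 2 * EE 0 s" unfolding EE_def using tt_summable[OF s, of 0]
      by (simp add: suminf_mult)
    then show ?thesis unfolding Fp_def ga_def by simp
  qed
  moreover have "Gc s 0 = (1 + 2 * EE 0 (1/s)) / sqrt s"
  proof -
    have "gt s n 0 = 2 * tt 0 (1/s) n" for n unfolding gt_def ga_def tt_def by (simp add: algebra_simps)
    then have "(\<Sum>n. gt s n 0) = 2 * EE 0 (1/s)" unfolding EE_def using tt_summable[of "1/s" 0] s
      by (simp add: suminf_mult)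
    then show ?thesis unfolding Gc_def by simp
  qed
  ultimately show ?thesis using e by simp
qed


theorem theorem3:
  fixes s :: real
  assumes "s > 0"
  shows "deriv (deriv theta3) s * theta3 s - (deriv theta3 s)^2
           > - (deriv theta3 s * theta3 s) / s
       \<and> - (deriv theta3 s * theta3 s) / s > 0"
proof (rule main_given_FE)
  show "th x = th (1/x) / sqrt x" if "x > 0" for x
    using FE_at[OF that] unfolding th_def .
qed (rule assms)

end
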